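(* Let $\lambda>0$, $n\ge0$ an integer and $x\in[-1,1]$. Then $$D^\lambda_+C^\lambda_n(x)=c_{n,\lambda}\frac{n(n+2\lambda)}{n+\lambda}\,\frac{1+x}2\,{}_2F_1\!\Big(-n+1,\,n+2\lambda+1;\,\lambda+1;\,\tfrac{1-x}2\Big),$$ $$D^\lambda_-C^\lambda_n(x)=c_{n,\lambda}\frac{n(n+2\lambda)}{\lambda+1}\,\frac{1-x}2\,{}_2F_1\!\Big(-n+1,\,n+2\lambda+1;\,\lambda+2;\,\tfrac{1-x}2\Big),$$ where $c_{n,\lambda}=\frac{\sqrt\pi(2\lambda)_n}{n!}\frac{\Gamma(\lambda+\frac12)}{\Gamma(\lambda+1)}$.
   Context: $C^\mu_n$ are Gegenbauer polynomials with generating function $(1-2xr+r^2)^{-\mu}$; ${}_2F_1$ is the Gauss hypergeometric function and $(a)_k$ the Pochhammer symbol. For $f$ absolutely continuous on $[-1,1]$ and $\lambda\ge0$: $D^\lambda_+f(x)=(1+x)\frac{d}{dx}\Big\{(1+x)^{-\lambda}\int_{-1}^x(x-\tau)^{-1/2}(1+\tau)^{\lambda-1/2}f(\tau)\,d\tau\Big\}$, $D^\lambda_-f(x)=(1-x)\frac{d}{dx}\Big\{(1-x)^{-\lambda}\int_x^1(\tau-x)^{-1/2}(1-\tau)^{\lambda-1/2}f(\tau)\,d\tau\Big\}$. *)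

theory Defs
  imports "HOL-Analysis.Analysis" "HOL-Computational_Algebra.Formal_Power_Series"
begin

text \<open>Gegenbauer polynomial: coefficient of r^n in the formal power series
  (1 - 2 x r + r^2)^(-mu) = (1 + u)^(-mu) with u = r^2 - 2 x r.\<close>
definition gegenbauer :: "nat \<Rightarrow> real \<Rightarrow> real \<Rightarrow> real" where
  "gegenbauer n mu x =
     fps_nth (fps_compose (fps_binomial (- mu)) (fps_X ^ 2 - fps_const (2 * x) * fps_X)) n"

definition hyp2F1 :: "real \<Rightarrow> real \<Rightarrow> real \<Rightarrow> real \<Rightarrow> real" where
  "hyp2F1 a b c z =
     (\<Sum>k. pochhammer a k * pochhammer b k / (pochhammer c k * fact k) * z ^ k)"

text \<open>Fractional-type operators D^lambda_+ and D^lambda_- on [-1,1]; the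
  derivative is taken within [-1,1] (one-sided at the endpoints).\<close>
definition D_plus :: "real \<Rightarrow> (real \<Rightarrow> real) \<Rightarrow> real \<Rightarrow> real" where
  "D_plus lam f x = (1 + x) *
     vector_derivative
       (\<lambda>y. (1 + y) powr (- lam) *
             integral {-1..y} (\<lambda>t. (y - t) powr (-1/2) * (1 + t) powr (lam - 1/2) * f t))
       (at x within {-1..1})"

definition D_minus :: "real \<Rightarrow> (real \<Rightarrow> real) \<Rightarrow> real \<Rightarrow> real" where
  "D_minus lam f x = (1 - x) *
     vector_derivative
       (\<lambda>y. (1 - y) powr (- lam) *
             integral {y..1} (\<lambda>t. (t - y) powr (-1/2) * (1 - t) powr (lam - 1/2) * f t))
       (at x within {-1..1})"

definition c_const :: "nat \<Rightarrow> real \<Rightarrow> real" where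
  "c_const n lam = sqrt pi * pochhammer (2 * lam) n / fact n * (Gamma (lam + 1/2) / Gamma (lam + 1))"

end

theory Submission
  imports Defs
begin


lemma binom_times_inv: "(1 + fps_X) * fps_deriv (fps_binomial a) = fps_const (a::real) * fps_binomial a"
proof -
  have u: "fps_nth (1 + fps_X :: real fps) 0 \<noteq> 0" by simp
  have "(1 + fps_X) * fps_deriv (fps_binomial a) = (1 + fps_X) * (fps_const a * fps_binomial a * inverse (1 + fps_X))"
    by (simp add: fps_binomial_deriv fps_divide_unit[OF u])
  also have "\<dots> = fps_const a * fps_binomial a * ((1 + fps_X) * inverse (1 + fps_X))"
    by (simp add: algebra_simps)
  also have "\<dots> = fps_const a * fps_binomial a" using inverse_mult_eq_1'[OF u] by simp
  finally show ?thesis .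
qed

lemma binom_ode:
  fixes h :: "real fps" assumes h0: "fps_nth h 0 = 0"
  shows "(1 + h) * fps_deriv (fps_binomial a oo h) = fps_const a * fps_deriv h * (fps_binomial a oo h)"
proof -
  have "((1 + fps_X) * fps_deriv (fps_binomial a)) oo h = (1 + h) * (fps_deriv (fps_binomial a) oo h)"
    by (simp add: fps_compose_mult_distrib[OF h0] fps_compose_add_distrib h0)
  hence e: "(1 + h) * (fps_deriv (fps_binomial a) oo h) = fps_const a * (fps_binomial a oo h)"
    by (simp add: binom_times_inv fps_const_mult_apply_left)
  show ?thesis
    by (simp add: fps_compose_deriv[OF h0] mult.assoc[symmetric] e)
qed

lemma binom_unique:
  fixes h D :: "real fps" assumes h0: "fps_nth h 0 = 0"
    and ode: "(1 + h) * fps_deriv D = fps_const a * fps_deriv h * D" and D0: "fps_nth D 0 = 1"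
  shows "D = fps_binomial a oo h"
proof -
  define C where "C = fps_binomial a oo h"
  have C0: "fps_nth C 0 = 1" by (simp add: C_def)
  have odeC: "(1 + h) * fps_deriv C = fps_const a * fps_deriv h * C"
    unfolding C_def by (rule binom_ode[OF h0])
  have "(1 + h) * (fps_deriv D * C - D * fps_deriv C) = 0"
  proof -
    have "(1 + h) * (fps_deriv D * C - D * fps_deriv C) = ((1 + h) * fps_deriv D) * C - D * ((1 + h) * fps_deriv C)"
      by (simp add: algebra_simps)
    also have "\<dots> = 0" by (simp only: ode odeC) (simp add: algebra_simps)
    finally show ?thesis .
  qed
  moreover have "1 + h \<noteq> 0"
  proof
    assume "1 + h = 0" hence "fps_nth (1 + h) 0 = 0" by simp
    thus False using h0 by simp
  qed
  ultimately have eq: "fps_deriv D * C = D * fps_deriv C" by simp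
  have C0': "fps_nth C 0 \<noteq> 0" using C0 by simp
  have "fps_deriv (D * inverse C) = inverse C ^ 2 * (fps_deriv D * C - D * fps_deriv C)"
  proof -
    have "fps_deriv (D * inverse C) = D * (- fps_deriv C * (inverse C)\<^sup>2) + fps_deriv D * inverse C"
      by (simp add: fps_inverse_deriv[OF C0'])
    also have "\<dots> = inverse C ^ 2 * (fps_deriv D * C - D * fps_deriv C) + fps_deriv D * inverse C * (1 - C * inverse C)"
      by (simp add: algebra_simps power2_eq_square)
    also have "\<dots> = inverse C ^ 2 * (fps_deriv D * C - D * fps_deriv C)"
      using inverse_mult_eq_1'[OF C0'] by simp
    finally show ?thesis .
  qed
  hence "fps_deriv (D * inverse C) = 0" using eq by simp
  hence "D * inverse C = fps_const (fps_nth (D * inverse C) 0)" using fps_deriv_eq_0_iff by blast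
  also have "fps_nth (D * inverse C) 0 = 1" using D0 C0 by simp
  finally have "D * inverse C = 1" by simp
  hence DC: "D * inverse C * C = C" by simp
  have "D = D * (inverse C * C)" using inverse_mult_eq_1[OF C0'] by simp
  also have "\<dots> = C" using DC by (simp only: mult.assoc)
  finally show ?thesis by (simp add: C_def)
qed

lemma binom_compose_mult:
  fixes f g :: "real fps" assumes f0: "fps_nth f 0 = 0" and g0: "fps_nth g 0 = 0"
  shows "fps_binomial a oo (f + g + f * g) = (fps_binomial a oo f) * (fps_binomial a oo g)"
proof -
  define Cf where "Cf = fps_binomial a oo f"
  define Cg where "Cg = fps_binomial a oo g"
  have ef: "(1 + f) * fps_deriv Cf = fps_const a * fps_deriv f * Cf" unfolding Cf_def by (rule binom_ode[OF f0])
  have eg: "(1 + g) * fps_deriv Cg = fps_const a * fps_deriv g * Cg" unfolding Cg_def by (rule binom_ode[OF g0])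
  have h0: "fps_nth (f + g + f * g) 0 = 0" using f0 g0 by simp
  have "(1 + (f + g + f * g)) * fps_deriv (Cf * Cg)
      = ((1 + f) * fps_deriv Cf) * ((1 + g) * Cg) + ((1 + g) * fps_deriv Cg) * ((1 + f) * Cf)"
    by (simp add: algebra_simps)
  also have "\<dots> = fps_const a * fps_deriv (f + g + f * g) * (Cf * Cg)"
    by (simp only: ef eg) (simp add: algebra_simps)
  finally have ode: "(1 + (f + g + f * g)) * fps_deriv (Cf * Cg) = fps_const a * fps_deriv (f + g + f * g) * (Cf * Cg)" .
  have "Cf * Cg = fps_binomial a oo (f + g + f * g)"
    by (rule binom_unique[OF h0 ode]) (simp add: Cf_def Cg_def)
  thus ?thesis by (simp add: Cf_def Cg_def)
qed


definition Pb :: "real \<Rightarrow> real \<Rightarrow> real fps" where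
  "Pb s a = fps_binomial a oo (fps_const s * fps_X)"

lemma Pb_mult: "Pb s a * Pb s b = Pb s (a + b)"
  by (simp add: Pb_def fps_compose_mult_distrib[symmetric] fps_binomial_add_mult)

lemma Pb_0: "Pb s 0 = 1" by (simp add: Pb_def)

lemma Pb_1: "Pb s 1 = 1 + fps_const s * fps_X"
  by (simp add: Pb_def fps_binomial_1 fps_compose_add_distrib)

lemma Pb_power: "Pb s a ^ k = Pb s (of_nat k * a)"
  by (simp add: Pb_def fps_compose_power fps_binomial_power)

lemma Pb_nth: "fps_nth (Pb s a) n = s ^ n * (a gchoose n)"
  by (simp add: Pb_def)

lemma gegen_expand:
  fixes s c x a :: real assumes ss: "s * s = 1" and cdef: "c = - 2 * x - 2 * s"
  shows "fps_nth (fps_compose (fps_binomial a) (fps_X ^ 2 - fps_const (2 * x) * fps_X)) n =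
    (\<Sum>k=0..n. (a gchoose k) * c ^ k * (s ^ (n - k) * ((2 * a - 2 * of_nat k) gchoose (n - k))))"
proof -
  define L where "L = fps_const s * fps_X"
  define f where "f = L + L + L * L"
  define w where "w = fps_const c * fps_X * Pb s (-2)"
  have L0: "fps_nth L 0 = 0" by (simp add: L_def)
  have f0: "fps_nth f 0 = 0" by (simp add: f_def L_def)
  have w0: "fps_nth w 0 = 0" by (simp add: w_def)
  have onef: "1 + f = Pb s 2"
  proof -
    have "1 + f = (1 + L) * (1 + L)" by (simp add: f_def algebra_simps)
    also have "\<dots> = Pb s 2" by (simp add: Pb_1[symmetric] L_def Pb_mult)
    finally show ?thesis .
  qed
  have fw: "f + w + f * w = fps_X ^ 2 - fps_const (2 * x) * fps_X"
  proof -
    have "f + w + f * w = f + fps_const c * fps_X * (Pb s (-2) * (1 + f))"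
      by (simp add: w_def algebra_simps)
    also have "\<dots> = f + fps_const c * fps_X" by (simp add: onef Pb_mult Pb_0)
    also have "\<dots> = fps_X ^ 2 - fps_const (2 * x) * fps_X"
    proof -
      have "L * L = fps_const (s * s) * fps_X ^ 2" by (simp add: L_def power2_eq_square algebra_simps)
      hence "L * L = fps_X ^ 2" using ss by simp
      moreover have "fps_const c = - fps_const (2 * x) - fps_const s - fps_const s"
        by (simp add: cdef)
      ultimately show ?thesis by (simp add: f_def L_def algebra_simps)
    qed
    finally show ?thesis .
  qed
  have Gdec: "fps_binomial a oo (fps_X ^ 2 - fps_const (2 * x) * fps_X) = Pb s (2 * a) * (fps_binomial a oo w)"
  proof -
    have "fps_binomial a oo f = Pb s a * Pb s a"
      unfolding f_def using binom_compose_mult[OF L0 L0, of a] by (simp only: Pb_def L_def)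
    also have "\<dots> = Pb s (2 * a)" unfolding Pb_mult by (simp only: mult_2)
    finally have "fps_binomial a oo f = Pb s (2 * a)" .
    moreover have "fps_binomial a oo (f + w + f * w) = (fps_binomial a oo f) * (fps_binomial a oo w)"
      by (rule binom_compose_mult[OF f0 w0])
    ultimately show ?thesis unfolding fw by (simp only:)
  qed
  define T where "T = (\<Sum>k=0..n. fps_const (a gchoose k) * w ^ k)"
  have wk: "w ^ k = fps_X ^ k * (fps_const (c ^ k) * Pb s (- 2 * of_nat k))" for k
    by (simp add: w_def power_mult_distrib Pb_power fps_const_power algebra_simps)
  have wkz: "fps_nth (w ^ k) j = 0" if "j < k" for j k
    unfolding wk fps_X_power_mult_nth using that by simp
  have cl1: "fps_nth (fps_binomial a oo w) j = fps_nth T j" if "j \<le> n" for j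
  proof -
    have "fps_nth (fps_binomial a oo w) j = (\<Sum>i=0..j. (a gchoose i) * fps_nth (w ^ i) j)"
      by (simp add: fps_compose_nth)
    also have "\<dots> = (\<Sum>i=0..n. (a gchoose i) * fps_nth (w ^ i) j)"
      by (rule sum.mono_neutral_left) (use that wkz in auto)
    also have "\<dots> = fps_nth T j" by (simp add: T_def fps_sum_nth)
    finally show ?thesis .
  qed
  have cl2: "fps_nth (Pb s (2 * a) * (fps_binomial a oo w)) n = fps_nth (Pb s (2 * a) * T) n"
    unfolding fps_mult_nth by (rule sum.cong) (auto simp: cl1)
  have cl3: "Pb s (2 * a) * T = (\<Sum>k=0..n. fps_const ((a gchoose k) * c ^ k) * (fps_X ^ k * Pb s (2 * a - 2 * of_nat k)))"
    unfolding T_def sum_distrib_left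
  proof (rule sum.cong[OF refl])
    fix k
    have "Pb s (2 * a) * (fps_const (a gchoose k) * w ^ k) =
          fps_const (a gchoose k) * fps_const (c ^ k) * (fps_X ^ k * (Pb s (2 * a) * Pb s (- 2 * of_nat k)))"
      unfolding wk by (simp add: algebra_simps)
    also have "\<dots> = fps_const ((a gchoose k) * c ^ k) * (fps_X ^ k * Pb s (2 * a - 2 * of_nat k))"
      by (simp add: Pb_mult)
    finally show "Pb s (2 * a) * (fps_const (a gchoose k) * w ^ k) = fps_const ((a gchoose k) * c ^ k) * (fps_X ^ k * Pb s (2 * a - 2 * of_nat k))" .
  qed
  show ?thesis
    unfolding Gdec cl2 cl3 fps_sum_nth fps_mult_left_const_nth fps_X_power_mult_nth Pb_nth
    by (rule sum.cong) auto
qed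


lemma beta_plus:
  fixes y mu :: real assumes y: "y > -1" and mu: "mu > 0"
  shows "((\<lambda>t. (y - t) powr (-1/2) * (1 + t) powr (mu - 1)) has_integral
           (1 + y) powr (mu - 1/2) * Beta mu (1/2)) {-1..y}"
proof -
  define r where "r = 1 + y"
  have r: "r > 0" using y by (simp add: r_def)
  have B: "((\<lambda>s. s powr (mu - 1) * (1 - s) powr (1/2 - 1)) has_integral Beta mu (1/2)) (cbox 0 1)"
    using has_integral_Beta_real[OF mu, of "1/2"] by simp
  have A0: "((\<lambda>t. (\<lambda>s. s powr (mu - 1) * (1 - s) powr (1/2 - 1)) ((1/r) *\<^sub>R t + 1/r)) has_integral
          (Beta mu (1/2) /\<^sub>R (1/r) ^ DIM(real))) (cbox ((0 - 1/r) /\<^sub>R (1/r)) ((1 - 1/r) /\<^sub>R (1/r)))"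
    by (rule has_integral_affinity'[OF B]) (use r in simp)
  have dom: "cbox ((0 - 1/r) /\<^sub>R (1/r)) ((1 - 1/r) /\<^sub>R (1/r)) = {-1..y}"
    using r by (simp add: r_def field_simps)
  have v: "Beta mu (1/2) /\<^sub>R (1/r) ^ DIM(real) = r * Beta mu (1/2)" by simp
  have A: "((\<lambda>t. ((1/r) * t + 1/r) powr (mu - 1) * (1 - ((1/r) * t + 1/r)) powr (1/2 - 1)) has_integral
          (r * Beta mu (1/2))) {-1..y}"
  proof -
    have dom': "cbox (inverse (1/r) * (0 - 1/r)) (inverse (1/r) * (1 - 1/r)) = {-1..y}"
      using r by (simp add: r_def field_simps)
    have v': "inverse ((1/r) ^ DIM(real)) * Beta mu (1/2) = r * Beta mu (1/2)" by simp
    show ?thesis using A0 unfolding real_scaleR_def dom' v' .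
  qed
  have A2: "((\<lambda>t. r powr (mu - 3/2) * (((1/r) * t + 1/r) powr (mu - 1) * (1 - ((1/r) * t + 1/r)) powr (1/2 - 1))) has_integral
          r powr (mu - 3/2) * (r * Beta mu (1/2))) {-1..y}"
    by (rule has_integral_mult_right[OF A])
  have eq: "r powr (mu - 3/2) * (((1/r) * t + 1/r) powr (mu - 1) * (1 - ((1/r) * t + 1/r)) powr (1/2 - 1))
        = (y - t) powr (-1/2) * (1 + t) powr (mu - 1)" for t
  proof -
    have "(1/r) * t + 1/r = (1 + t) / r" by (simp add: add_divide_distrib)
    moreover have "1 - (1 + t) / r = (y - t) / r" using r by (simp add: r_def field_simps)
    ultimately have "r powr (mu - 3/2) * (((1/r) * t + 1/r) powr (mu - 1) * (1 - ((1/r) * t + 1/r)) powr (1/2 - 1))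
        = r powr (mu - 3/2) * ((1 + t) powr (mu - 1) / r powr (mu - 1) * ((y - t) powr (-1/2) / r powr (-1/2)))"
      by (simp add: powr_divide)
    also have "\<dots> = (r powr (mu - 3/2) / (r powr (mu - 1) * r powr (-1/2))) * ((y - t) powr (-1/2) * (1 + t) powr (mu - 1))"
      by simp
    also have "r powr (mu - 1) * r powr (-1/2) = r powr (mu - 3/2)"
      by (simp add: powr_add[symmetric])
    finally show ?thesis using r by simp
  qed
  have val: "r powr (mu - 3/2) * (r * Beta mu (1/2)) = (1 + y) powr (mu - 1/2) * Beta mu (1/2)"
  proof -
    have "r powr (mu - 3/2) * r = r powr (mu - 1/2)"
      using powr_add[of r "mu - 3/2" 1] r by simp
    thus ?thesis by (simp add: r_def mult.assoc[symmetric])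
  qed
  show ?thesis using A2 unfolding eq val .
qed

lemma beta_minus:
  fixes y mu :: real assumes y: "y < 1" and mu: "mu > 0"
  shows "((\<lambda>t. (t - y) powr (-1/2) * (1 - t) powr (mu - 1)) has_integral
           (1 - y) powr (mu - 1/2) * Beta mu (1/2)) {y..1}"
proof -
  define f where "f = (\<lambda>t::real. (- y - t) powr (-1/2) * (1 + t) powr (mu - 1))"
  have P: "(f has_integral (1 + - y) powr (mu - 1/2) * Beta mu (1/2)) {-1..-y}"
    unfolding f_def by (rule beta_plus) (use y mu in auto)
  have R: "((\<lambda>x. f (- x)) has_integral (1 + - y) powr (mu - 1/2) * Beta mu (1/2)) {- (- y)..- (-1)}"
    using P by (rule has_integral_reflect_real[THEN iffD2])
  have e1: "{- (- y)..- (-1)} = {y..(1::real)}" by simp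
  have e2: "(1 + - y) = 1 - y" by simp
  have e3: "f (- x) = (x - y) powr (-1/2) * (1 - x) powr (mu - 1)" for x
    unfolding f_def by (simp only: diff_minus_eq_add add_uminus_conv_diff add.commute)
  show ?thesis using R unfolding e1 e2 e3 .
qed


lemma powr_times_power:
  fixes u p :: real assumes "u \<ge> 0"
  shows "u powr p * u ^ k = u powr (p + real k)"
proof (cases "u = 0")
  case True thus ?thesis by simp
next
  case False
  hence "u > 0" using assms by simp
  thus ?thesis by (simp add: powr_add powr_realpow)
qed

lemma Dplus_poly:
  fixes lam x :: real and a :: "nat \<Rightarrow> real" and N :: nat
  assumes lam: "lam > 0" and x: "x \<in> {-1..1}"
  shows "D_plus lam (\<lambda>t. \<Sum>k<N. a k * (1 + t) ^ k) x =
         (\<Sum>k<N. real k * a k * Beta (lam + real k + 1/2) (1/2) * (1 + x) ^ k)"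
proof -
  define Bk where "Bk k = Beta (lam + real k + 1/2) (1/2)" for k
  define Q where "Q y = (\<Sum>k<N. a k * Bk k * (1 + y) ^ k)" for y
  define Q' where "Q' y = (\<Sum>k<N. a k * Bk k * (real k * (1 + y) ^ (k - 1)))" for y
  define g where "g y = (1 + y) powr (- lam) * integral {-1..y}
      (\<lambda>t. (y - t) powr (-1/2) * (1 + t) powr (lam - 1/2) * (\<Sum>k<N. a k * (1 + t) ^ k))" for y
  have ginner: "g y = Q y" if y: "y > -1" for y
  proof -
    have each: "((\<lambda>t. a k * ((y - t) powr (-1/2) * (1 + t) powr (lam + real k + 1/2 - 1))) has_integral
           a k * ((1 + y) powr (lam + real k + 1/2 - 1/2) * Bk k)) {-1..y}" for k
      unfolding Bk_def by (intro has_integral_mult_right beta_plus) (use y lam in auto)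
    have S: "((\<lambda>t. \<Sum>k<N. a k * ((y - t) powr (-1/2) * (1 + t) powr (lam + real k + 1/2 - 1))) has_integral
           (\<Sum>k<N. a k * ((1 + y) powr (lam + real k + 1/2 - 1/2) * Bk k))) {-1..y}"
      by (rule has_integral_sum[OF finite_lessThan each])
    have pw: "(y - t) powr (-1/2) * (1 + t) powr (lam - 1/2) * (\<Sum>k<N. a k * (1 + t) ^ k) =
              (\<Sum>k<N. a k * ((y - t) powr (-1/2) * (1 + t) powr (lam + real k + 1/2 - 1)))"
      if t: "t \<in> {-1..y}" for t
    proof -
      have "(1 + t) powr (lam - 1/2) * (1 + t) ^ k = (1 + t) powr (lam + real k + 1/2 - 1)" for k
        using powr_times_power[of "1 + t" "lam - 1/2" k] t by (simp add: algebra_simps)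
      hence "(y - t) powr (-1/2) * (1 + t) powr (lam - 1/2) * (a k * (1 + t) ^ k) =
             a k * ((y - t) powr (-1/2) * (1 + t) powr (lam + real k + 1/2 - 1))" for k
        by (metis (no_types, lifting) mult.assoc mult.left_commute)
      note e = this
      show ?thesis by (simp only: sum_distrib_left e)
    qed
    have I: "((\<lambda>t. (y - t) powr (-1/2) * (1 + t) powr (lam - 1/2) * (\<Sum>k<N. a k * (1 + t) ^ k)) has_integral
           (\<Sum>k<N. a k * ((1 + y) powr (lam + real k + 1/2 - 1/2) * Bk k))) {-1..y}"
      using S by (rule has_integral_eq[rotated]) (simp only: pw)
    have "g y = (1 + y) powr (- lam) * (\<Sum>k<N. a k * ((1 + y) powr (lam + real k + 1/2 - 1/2) * Bk k))"
      unfolding g_def using integral_unique[OF I] by simp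
    also have "\<dots> = (\<Sum>k<N. a k * Bk k * ((1 + y) powr (- lam) * (1 + y) powr (lam + real k)))"
      by (simp add: sum_distrib_left algebra_simps)
    also have "\<dots> = Q y"
    proof -
      have "(1 + y) powr (- lam) * (1 + y) powr (lam + real k) = (1 + y) ^ k" for k
        using y by (simp add: powr_add[symmetric] powr_realpow)
      thus ?thesis by (simp add: Q_def)
    qed
    finally show ?thesis .
  qed
  have dQ: "(Q has_real_derivative Q' y) (at y within S)" for y S
    unfolding Q_def Q'_def
    apply (rule derivative_eq_intros refl | simp)+
    apply (simp add: mult_ac)
    done
  have lhs: "D_plus lam (\<lambda>t. \<Sum>k<N. a k * (1 + t) ^ k) x = (1 + x) * vector_derivative g (at x within {-1..1})"
    by (simp only: D_plus_def g_def[abs_def])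
  show ?thesis
  proof (cases "x = -1")
    case True
    have "(\<Sum>k<N. real k * a k * Beta (lam + real k + 1/2) (1/2) * (1 + x) ^ k) = 0"
      by (rule sum.neutral) (use True in \<open>auto simp: zero_power\<close>)
    thus ?thesis using lhs True by simp
  next
    case False
    hence xg: "x > -1" using x by simp
    have hv: "(g has_vector_derivative Q' x) (at x within {-1..1})"
    proof (rule has_vector_derivative_transform_within)
      show "(Q has_vector_derivative Q' x) (at x within {-1..1})"
        using dQ by (simp add: has_real_derivative_iff_has_vector_derivative)
      show "0 < 1 + x" using xg by simp
      show "x \<in> {-1..1}" using x .
      fix x' assume "x' \<in> {-1..1}" "dist x' x < 1 + x"
      hence "x' > -1" by (auto simp: dist_real_def)
      thus "Q x' = g x'" by (simp add: ginner)
    qed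
    have "vector_derivative g (at x within {-1..1}) = Q' x"
      using vector_derivative_within_cbox[of "-1" 1 x g "Q' x"] hv x by simp
    hence "D_plus lam (\<lambda>t. \<Sum>k<N. a k * (1 + t) ^ k) x = (1 + x) * Q' x" using lhs by simp
    also have "\<dots> = (\<Sum>k<N. real k * a k * Beta (lam + real k + 1/2) (1/2) * (1 + x) ^ k)"
      unfolding Q'_def sum_distrib_left
    proof (rule sum.cong[OF refl])
      fix k
      show "(1 + x) * (a k * Bk k * (real k * (1 + x) ^ (k - 1))) = real k * a k * Beta (lam + real k + 1/2) (1/2) * (1 + x) ^ k"
      proof (cases k)
        case 0 thus ?thesis by simp
      next
        case (Suc m) thus ?thesis by (simp add: Bk_def algebra_simps)
      qed
    qed
    finally show ?thesis .
  qed
qed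

lemma Dminus_poly:
  fixes lam x :: real and a :: "nat \<Rightarrow> real" and N :: nat
  assumes lam: "lam > 0" and x: "x \<in> {-1..1}"
  shows "D_minus lam (\<lambda>t. \<Sum>k<N. a k * (1 - t) ^ k) x =
         - (\<Sum>k<N. real k * a k * Beta (lam + real k + 1/2) (1/2) * (1 - x) ^ k)"
proof -
  define Bk where "Bk k = Beta (lam + real k + 1/2) (1/2)" for k
  define Q where "Q y = (\<Sum>k<N. a k * Bk k * (1 - y) ^ k)" for y
  define Q' where "Q' y = (\<Sum>k<N. a k * Bk k * (- (real k * (1 - y) ^ (k - 1))))" for y
  define g where "g y = (1 - y) powr (- lam) * integral {y..1}
      (\<lambda>t. (t - y) powr (-1/2) * (1 - t) powr (lam - 1/2) * (\<Sum>k<N. a k * (1 - t) ^ k))" for y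
  have ginner: "g y = Q y" if y: "y < 1" for y
  proof -
    have each: "((\<lambda>t. a k * ((t - y) powr (-1/2) * (1 - t) powr (lam + real k + 1/2 - 1))) has_integral
           a k * ((1 - y) powr (lam + real k + 1/2 - 1/2) * Bk k)) {y..1}" for k
      unfolding Bk_def by (intro has_integral_mult_right beta_minus) (use y lam in auto)
    have S: "((\<lambda>t. \<Sum>k<N. a k * ((t - y) powr (-1/2) * (1 - t) powr (lam + real k + 1/2 - 1))) has_integral
           (\<Sum>k<N. a k * ((1 - y) powr (lam + real k + 1/2 - 1/2) * Bk k))) {y..1}"
      by (rule has_integral_sum[OF finite_lessThan each])
    have pw: "(t - y) powr (-1/2) * (1 - t) powr (lam - 1/2) * (\<Sum>k<N. a k * (1 - t) ^ k) =
              (\<Sum>k<N. a k * ((t - y) powr (-1/2) * (1 - t) powr (lam + real k + 1/2 - 1)))"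
      if t: "t \<in> {y..1}" for t
    proof -
      have "(1 - t) powr (lam - 1/2) * (1 - t) ^ k = (1 - t) powr (lam + real k + 1/2 - 1)" for k
        using powr_times_power[of "1 - t" "lam - 1/2" k] t by (simp add: algebra_simps)
      hence "(t - y) powr (-1/2) * (1 - t) powr (lam - 1/2) * (a k * (1 - t) ^ k) =
             a k * ((t - y) powr (-1/2) * (1 - t) powr (lam + real k + 1/2 - 1))" for k
        by (metis (no_types, lifting) mult.assoc mult.left_commute)
      note e = this
      show ?thesis by (simp only: sum_distrib_left e)
    qed
    have I: "((\<lambda>t. (t - y) powr (-1/2) * (1 - t) powr (lam - 1/2) * (\<Sum>k<N. a k * (1 - t) ^ k)) has_integral
           (\<Sum>k<N. a k * ((1 - y) powr (lam + real k + 1/2 - 1/2) * Bk k))) {y..1}"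
      using S by (rule has_integral_eq[rotated]) (simp only: pw)
    have "g y = (1 - y) powr (- lam) * (\<Sum>k<N. a k * ((1 - y) powr (lam + real k + 1/2 - 1/2) * Bk k))"
      unfolding g_def using integral_unique[OF I] by simp
    also have "\<dots> = (\<Sum>k<N. a k * Bk k * ((1 - y) powr (- lam) * (1 - y) powr (lam + real k)))"
      by (simp add: sum_distrib_left algebra_simps)
    also have "\<dots> = Q y"
    proof -
      have "(1 - y) powr (- lam) * (1 - y) powr (lam + real k) = (1 - y) ^ k" for k
        using y by (simp add: powr_add[symmetric] powr_realpow)
      thus ?thesis by (simp add: Q_def)
    qed
    finally show ?thesis .
  qed
  have dQ: "(Q has_real_derivative Q' y) (at y within S)" for y S
    unfolding Q_def Q'_def
    apply (rule derivative_eq_intros refl | simp)+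
    apply (simp add: mult_ac)
    done
  have lhs: "D_minus lam (\<lambda>t. \<Sum>k<N. a k * (1 - t) ^ k) x = (1 - x) * vector_derivative g (at x within {-1..1})"
    by (simp only: D_minus_def g_def[abs_def])
  show ?thesis
  proof (cases "x = 1")
    case True
    have "(\<Sum>k<N. real k * a k * Beta (lam + real k + 1/2) (1/2) * (1 - x) ^ k) = 0"
      by (rule sum.neutral) (use True in \<open>auto simp: zero_power\<close>)
    thus ?thesis using lhs True by simp
  next
    case False
    hence xg: "x < 1" using x by simp
    have hv: "(g has_vector_derivative Q' x) (at x within {-1..1})"
    proof (rule has_vector_derivative_transform_within)
      show "(Q has_vector_derivative Q' x) (at x within {-1..1})"
        using dQ by (simp add: has_real_derivative_iff_has_vector_derivative)
      show "0 < 1 - x" using xg by simp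
      show "x \<in> {-1..1}" using x .
      fix x' assume "x' \<in> {-1..1}" "dist x' x < 1 - x"
      hence "x' < 1" by (auto simp: dist_real_def)
      thus "Q x' = g x'" by (simp add: ginner)
    qed
    have "vector_derivative g (at x within {-1..1}) = Q' x"
      using vector_derivative_within_cbox[of "-1" 1 x g "Q' x"] hv x by simp
    hence "D_minus lam (\<lambda>t. \<Sum>k<N. a k * (1 - t) ^ k) x = (1 - x) * Q' x" using lhs by simp
    also have "\<dots> = - (\<Sum>k<N. real k * a k * Beta (lam + real k + 1/2) (1/2) * (1 - x) ^ k)"
      unfolding Q'_def sum_distrib_left sum_negf[symmetric]
    proof (rule sum.cong[OF refl])
      fix k
      show "(1 - x) * (a k * Bk k * (- (real k * (1 - x) ^ (k - 1)))) = - (real k * a k * Beta (lam + real k + 1/2) (1/2) * (1 - x) ^ k)"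
      proof (cases k)
        case 0 thus ?thesis by simp
      next
        case (Suc m) thus ?thesis by (simp add: Bk_def algebra_simps)
      qed
    qed
    finally show ?thesis .
  qed
qed


definition pcoef :: "real \<Rightarrow> nat \<Rightarrow> nat \<Rightarrow> real" where
  "pcoef lam n k = pochhammer (2*lam) n / fact n *
     (pochhammer (- real n) k * pochhammer (real n + 2*lam) k / (pochhammer (lam + 1/2) k * fact k * 2^k))"

lemma coefA:
  fixes lam :: real assumes lam: "lam > 0" and kn: "k \<le> n"
  shows "((-lam) gchoose k) * 2^k * ((-1)^(n-k) * ((2*(-lam) - 2*real k) gchoose (n-k))) = pcoef lam n k"
proof -
  define P where "P = pochhammer (2*lam + 2*real k) (n-k)"
  have g1: "(-lam) gchoose k = (-1)^k * pochhammer lam k / fact k" by (simp add: gbinomial_pochhammer)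
  have e: "- (2*(-lam) - 2*real k) = 2*lam + 2*real k" by simp
  have g2: "(2*(-lam) - 2*real k) gchoose (n-k) = (-1)^(n-k) * P / fact (n-k)"
    unfolding gbinomial_pochhammer e P_def ..
  have m1: "(-1::real)^(n-k) * (-1)^(n-k) = 1" by (simp add: power_mult_distrib[symmetric])
  have L: "((-lam) gchoose k) * 2^k * ((-1)^(n-k) * ((2*(-lam) - 2*real k) gchoose (n-k)))
      = (-1)^k * pochhammer lam k * 2^k * P / (fact k * fact (n-k))"
    unfolding g1 g2 using m1 by (simp add: field_simps)
  have p1: "pochhammer (2*lam) n * pochhammer (real n + 2*lam) k = pochhammer (2*lam) (2*k) * P"
  proof -
    have "pochhammer (2*lam) (n + k) = pochhammer (2*lam) n * pochhammer (real n + 2*lam) k"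
      using pochhammer_product'[of "2*lam" n k] by (simp add: add.commute)
    moreover have "pochhammer (2*lam) (2*k + (n - k)) = pochhammer (2*lam) (2*k) * P"
      using pochhammer_product'[of "2*lam" "2*k" "n-k"] by (simp add: P_def)
    moreover have "2*k + (n - k) = n + k" using kn by simp
    ultimately show ?thesis by simp
  qed
  have p2: "pochhammer (2*lam) (2*k) = 2^(2*k) * pochhammer lam k * pochhammer (lam + 1/2) k"
    using pochhammer_double[of lam k] by simp
  have p3: "pochhammer (- real n) k * fact (n-k) = (-1)^k * fact n"
  proof -
    have "fact n = (pochhammer 1 ((n - k) + k) :: real)" using kn by (simp add: pochhammer_fact)
    also have "\<dots> = fact (n-k) * pochhammer (real n - real k + 1) k"
      using pochhammer_product'[of "1::real" "n-k" k] kn by (simp add: of_nat_diff add.commute pochhammer_fact)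
    finally have "fact n = fact (n-k) * pochhammer (real n - real k + 1) k" .
    moreover have "pochhammer (- real n) k = (-1)^k * pochhammer (real n - real k + 1) k"
      by (simp add: pochhammer_minus)
    ultimately show ?thesis by simp
  qed
  have nz1: "pochhammer (lam + 1/2) k > 0" by (rule pochhammer_pos) (use lam in simp)
  have R: "pcoef lam n k = (pochhammer (2*lam) n * pochhammer (real n + 2*lam) k) * (pochhammer (- real n) k * fact (n-k))
        / (fact n * fact (n-k) * pochhammer (lam + 1/2) k * fact k * 2^k)"
    unfolding pcoef_def by (simp add: field_simps)
  also have "\<dots> = 2^(2*k) * pochhammer lam k * pochhammer (lam + 1/2) k * P * ((-1)^k * fact n)
        / (fact n * fact (n-k) * pochhammer (lam + 1/2) k * fact k * 2^k)"
    unfolding p1 p2 p3 ..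
  also have "\<dots> = (-1)^k * pochhammer lam k * 2^k * P / (fact k * fact (n-k))"
    using nz1 by (simp add: field_simps power_mult power2_eq_square)
  finally show ?thesis using L by simp
qed


definition Kc :: "real \<Rightarrow> real" where
  "Kc lam = sqrt pi * (Gamma (lam + 1/2) / Gamma (lam + 1))"

definition T1 :: "real \<Rightarrow> nat \<Rightarrow> nat \<Rightarrow> real" where
  "T1 lam n j = pochhammer (1 - real n) j * pochhammer (real n + 2*lam + 1) j / (pochhammer (lam + 1) j * fact j)"

definition T2 :: "real \<Rightarrow> nat \<Rightarrow> nat \<Rightarrow> real" where
  "T2 lam n j = pochhammer (1 - real n) j * pochhammer (real n + 2*lam + 1) j / (pochhammer (lam + 2) j * fact j)"

lemma not_nonpos_pos: "(z::real) > 0 \<Longrightarrow> z \<notin> \<int>\<^sub>\<le>\<^sub>0"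
  using nonpos_Ints_nonpos by force

lemma Bk_form:
  fixes lam :: real assumes lam: "lam > 0"
  shows "Beta (lam + real k + 1/2) (1/2) = Kc lam * pochhammer (lam + 1/2) k / pochhammer (lam + 1) k"
proof -
  have a: "pochhammer (lam + 1/2) k = Gamma (lam + 1/2 + real k) / Gamma (lam + 1/2)"
    by (rule pochhammer_Gamma[OF not_nonpos_pos]) (use lam in simp)
  have b: "pochhammer (lam + 1) k = Gamma (lam + 1 + real k) / Gamma (lam + 1)"
    by (rule pochhammer_Gamma[OF not_nonpos_pos]) (use lam in simp)
  have g1: "Gamma (lam + 1/2) > 0" "Gamma (lam + 1) > 0" "Gamma (lam + 1 + real k) > 0"
    using lam by simp_all
  have "Beta (lam + real k + 1/2) (1/2) = Gamma (lam + 1/2 + real k) * sqrt pi / Gamma (lam + 1 + real k)"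
    unfolding Beta_def Gamma_one_half_real[symmetric] by (simp add: add_ac)
  also have "\<dots> = Kc lam * pochhammer (lam + 1/2) k / pochhammer (lam + 1) k"
    unfolding a b Kc_def using g1 by (simp add: field_simps)
  finally show ?thesis .
qed

lemma c_const_Kc: "c_const n lam = Kc lam * pochhammer (2*lam) n / fact n"
  unfolding c_const_def Kc_def by (simp only: times_divide_eq_right times_divide_eq_left mult_ac divide_divide_eq_left)

lemma TL_alg:
  fixes A F P Q H G J W U K n m L u :: real
  assumes "F \<noteq> 0" "H \<noteq> 0" "G \<noteq> 0" "J \<noteq> 0" "W \<noteq> 0" "L \<noteq> 0" "m \<noteq> 0"
  shows "- (m * (A / F * (- n * P * (m2 * Q) / (H * (m * J) * (2 * W)))) * (K * H / (L * G)) * (u * U))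
    = K * A / F * (n * m2 / L) * (u / 2) * (P * Q / (G * J) * (U / W))"
  using assms by (simp add: field_simps)

lemma TL:
  fixes lam u :: real assumes lam: "lam > 0"
  shows "- (real (Suc j) * pcoef lam n (Suc j) * Beta (lam + real (Suc j) + 1/2) (1/2) * u ^ Suc j)
    = c_const n lam * (real n * (real n + 2 * lam) / (lam + 1)) * (u / 2) * (T2 lam n j * (u / 2) ^ j)"
proof -
  have nz: "pochhammer (lam + 1/2) (Suc j) > 0" "pochhammer (lam + 2) j > 0"
    by (rule pochhammer_pos, use lam in simp)+
  have r1: "pochhammer (- real n) (Suc j) = - real n * pochhammer (1 - real n) j"
    by (simp add: pochhammer_rec add.commute)
  have r2: "pochhammer (real n + 2*lam) (Suc j) = (real n + 2*lam) * pochhammer (real n + 2*lam + 1) j"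
    by (simp add: pochhammer_rec)
  have r3: "pochhammer (lam + 1) (Suc j) = (lam + 1) * pochhammer (lam + 2) j"
    by (simp add: pochhammer_rec add.assoc)
  have l1: "lam + 1 \<noteq> 0" using lam by simp
  have f: "fact (Suc j) = real (Suc j) * fact j" by simp
  have p: "u ^ Suc j = u * u ^ j" "(2::real) ^ Suc j = 2 * 2 ^ j" "(u / 2) ^ j = u ^ j / 2 ^ j"
    by (simp_all add: power_divide)
  have lhs: "pcoef lam n (Suc j) = pochhammer (2*lam) n / fact n *
     (- real n * pochhammer (1 - real n) j * ((real n + 2*lam) * pochhammer (real n + 2*lam + 1) j) /
      (pochhammer (lam + 1/2) (Suc j) * (real (Suc j) * fact j) * (2 * 2^j)))"
    unfolding pcoef_def r1 r2 f p by (simp only: mult.assoc)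
  have bk: "Beta (lam + real (Suc j) + 1/2) (1/2) = Kc lam * pochhammer (lam + 1/2) (Suc j) / ((lam + 1) * pochhammer (lam + 2) j)"
    unfolding Bk_form[OF lam] r3 ..
  show ?thesis
    unfolding lhs bk c_const_Kc T2_def p(1) p(3)
    by (rule TL_alg) (use nz l1 in auto)
qed

lemma hyp_finite:
  assumes n: "n \<ge> 1" and c: "c > 0"
  shows "hyp2F1 (1 - real n) b c z = (\<Sum>j<n. pochhammer (1 - real n) j * pochhammer b j / (pochhammer c j * fact j) * z ^ j)"
  unfolding hyp2F1_def
proof (rule suminf_finite)
  fix j assume "j \<notin> {..<n}"
  hence "j > n - 1" using n by simp
  moreover have "1 - real n = - real (n - 1)" using n by (simp add: of_nat_diff)
  ultimately have "pochhammer (1 - real n) j = 0"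
    using pochhammer_of_nat_eq_0_iff[of "n - 1" j, where 'a=real] by (simp only:)
  thus "pochhammer (1 - real n) j * pochhammer b j / (pochhammer c j * fact j) * z ^ j = 0" by simp
qed simp

lemma swap_tri:
  fixes g :: "nat \<Rightarrow> nat \<Rightarrow> real"
  shows "(\<Sum>j<n. \<Sum>i\<le>j. g i j) = (\<Sum>i<n. \<Sum>j\<in>{i..<n}. g i j)"
proof (induction n)
  case 0 thus ?case by simp
next
  case (Suc n)
  have "(\<Sum>i<Suc n. \<Sum>j\<in>{i..<Suc n}. g i j) = (\<Sum>i<n. \<Sum>j\<in>{i..<Suc n}. g i j) + g n n"
    by simp
  also have "(\<Sum>i<n. \<Sum>j\<in>{i..<Suc n}. g i j) = (\<Sum>i<n. (\<Sum>j\<in>{i..<n}. g i j) + g i n)"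
    by (rule sum.cong) (auto simp: atLeastLessThanSuc)
  also have "\<dots> = (\<Sum>i<n. \<Sum>j\<in>{i..<n}. g i j) + (\<Sum>i<n. g i n)" by (simp add: sum.distrib)
  finally show ?case using Suc by (simp add: lessThan_Suc_atMost[symmetric])
qed


lemma tm_alg:
  fixes Pi Pl Bi Bl Li Ll Fil Fi Fl :: real
  assumes "Fil \<noteq> 0" "Fi \<noteq> 0" "Fl \<noteq> 0" "Li \<noteq> 0" "Ll \<noteq> 0"
  shows "(Pi * Pl) * (Bi * Bl) / ((Li * Ll) * Fil) * (Fil / (Fi * Fl)) = Pi * Bi / (Li * Fi) * (Bl * Pl / (Fl * Ll))"
  using assms by (simp add: field_simps)

lemma ratio_alg:
  fixes c A B s :: real
  assumes "c \<noteq> 0" "B \<noteq> 0" "c * A = s * B"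
  shows "A / B = s / c"
  using assms by (simp add: field_simps)

lemma B_alg:
  fixes L P Q Li Lc G F N S zi sg Z :: real
  assumes "Li \<noteq> 0" "Lc \<noteq> 0" "G \<noteq> 0" "F \<noteq> 0" "L \<noteq> 0" "Li * Lc = L * G" "zi * S = sg * Z"
  shows "L * (zi * (P * Q / (Li * F) * S * (N / Lc))) = N * sg * (P * Q / (G * F) * Z)"
proof -
  have "L * (zi * (P * Q / (Li * F) * S * (N / Lc))) = (zi * S) * N * P * Q * L / ((Li * Lc) * F)"
    using assms(1-4) by (simp add: field_simps)
  also have "\<dots> = (sg * Z) * N * P * Q * L / ((L * G) * F)" using assms(6,7) by simp
  also have "\<dots> = N * sg * (P * Q / (G * F) * Z)" using assms(1-5) by (simp add: field_simps)
  finally show ?thesis .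
qed

lemma IN:
  fixes lam :: real assumes lam: "lam > 0" and i: "i < n"
  shows "(\<Sum>j\<in>{i..<n}. T1 lam n j * real (j choose i)) =
         T1 lam n i * (-1)^(n - 1 - i) * ((real n + lam) / (lam + 1 + real i))"
proof -
  define M where "M = n - 1 - i"
  define b where "b = real n + 2*lam + 1"
  have nM: "n - i = Suc M" using i by (simp add: M_def)
  have rM: "real M = real n - 1 - real i" using i by (simp add: M_def of_nat_diff)
  have nzc: "pochhammer (lam + 1 + real i) l > 0" for l by (rule pochhammer_pos) (use lam in simp)
  have nz1: "pochhammer (lam + 1) i > 0" by (rule pochhammer_pos) (use lam in simp)
  have tm: "T1 lam n (i + l) * real ((i + l) choose i) =
      T1 lam n i * (pochhammer (b + real i) l * pochhammer (- real M) l / (fact l * pochhammer (lam + 1 + real i) l))" for l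
  proof -
    have q1: "pochhammer (1 - real n) (i + l) = pochhammer (1 - real n) i * pochhammer (- real M) l"
    proof -
      have "1 - real n + real i = - real M" using rM by simp
      thus ?thesis using pochhammer_product'[of "1 - real n" i l] by simp
    qed
    have q2: "pochhammer b (i + l) = pochhammer b i * pochhammer (b + real i) l"
      by (rule pochhammer_product')
    have q3: "pochhammer (lam + 1) (i + l) = pochhammer (lam + 1) i * pochhammer (lam + 1 + real i) l"
      by (rule pochhammer_product')
    have q4: "real ((i + l) choose i) = fact (i + l) / (fact i * fact l)"
      using binomial_fact[of i "i + l", where 'a=real] by simp
    show ?thesis
      unfolding T1_def b_def[symmetric] q1 q2 q3 q4
      by (rule tm_alg) (use nzc[of l] nz1 in auto)
  qed
  have S1: "(\<Sum>j\<in>{i..<n}. T1 lam n j * real (j choose i)) =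
        (\<Sum>l\<in>{0..<n - i}. T1 lam n (i + l) * real ((i + l) choose i))"
    using sum.atLeastLessThan_shift_0[of "\<lambda>j. T1 lam n j * real (j choose i)" i n] by (simp only: comp_def)
  have S2: "(\<Sum>l\<in>{0..<n - i}. T1 lam n (i + l) * real ((i + l) choose i)) =
     T1 lam n i * (\<Sum>l\<in>{0..M}. pochhammer (b + real i) l * pochhammer (- real M) l / (fact l * pochhammer (lam + 1 + real i) l))"
    unfolding tm sum_distrib_left nM atLeastLessThanSuc_atLeastAtMost ..
  have V: "(\<Sum>l\<in>{0..M}. pochhammer (b + real i) l * pochhammer (- real M) l / (fact l * pochhammer (lam + 1 + real i) l))
      = pochhammer (lam + 1 + real i - (b + real i)) M / pochhammer (lam + 1 + real i) M"
  proof -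
    have c: "\<forall>k \<in> {0..<M}. lam + 1 + real i \<noteq> - of_nat k" using lam by auto
    show ?thesis using Vandermonde_pochhammer[OF c, of "b + real i"] by (simp only: of_nat_fact)
  qed
  have e1: "lam + 1 + real i - (b + real i) = - (real n + lam)" by (simp add: b_def)
  have e2: "pochhammer (- (real n + lam)) M = (-1)^M * pochhammer (lam + real i + 2) M"
  proof -
    have a: "real n + lam - real M + 1 = lam + real i + 2" using rM by simp
    show ?thesis using pochhammer_minus[of "real n + lam" M] unfolding a .
  qed
  have e3: "pochhammer (lam + real i + 2) M / pochhammer (lam + 1 + real i) M = (real n + lam) / (lam + 1 + real i)"
  proof (rule ratio_alg)
    have "pochhammer (lam + 1 + real i) (Suc M) = (lam + 1 + real i) * pochhammer (lam + real i + 2) M"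
      by (simp add: pochhammer_rec add_ac)
    moreover have "pochhammer (lam + 1 + real i) (Suc M) = (lam + 1 + real i + real M) * pochhammer (lam + 1 + real i) M"
      by (simp add: pochhammer_rec')
    moreover have "lam + 1 + real i + real M = real n + lam" using rM by simp
    ultimately show "(lam + 1 + real i) * pochhammer (lam + real i + 2) M = (real n + lam) * pochhammer (lam + 1 + real i) M"
      by simp
    show "lam + 1 + real i \<noteq> 0" using lam by simp
    show "pochhammer (lam + 1 + real i) M \<noteq> 0" using nzc[of M] by simp
  qed
  have "(\<Sum>j\<in>{i..<n}. T1 lam n j * real (j choose i)) = T1 lam n i * ((-1)^M * (pochhammer (lam + real i + 2) M / pochhammer (lam + 1 + real i) M))"
    unfolding S1 S2 V e1 e2 by (simp only: times_divide_eq_right)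
  also have "\<dots> = T1 lam n i * (-1)^(n - 1 - i) * ((real n + lam) / (lam + 1 + real i))"
    unfolding e3 by (simp only: M_def mult.assoc)
  finally show ?thesis .
qed

lemma KI:
  fixes lam z :: real assumes lam: "lam > 0" and n: "n \<ge> 1"
  shows "(lam + 1) * (\<Sum>j<n. T1 lam n j * (1 - z)^j) = (real n + lam) * (-1)^(n+1) * (\<Sum>j<n. T2 lam n j * z^j)"
proof -
  have "(\<Sum>j<n. T1 lam n j * (1 - z)^j) = (\<Sum>j<n. \<Sum>i\<le>j. T1 lam n j * real (j choose i) * (-z)^i)"
  proof (rule sum.cong[OF refl])
    fix j
    have e: "1 - z = -z + 1" by simp
    have "(1 - z)^j = (\<Sum>i\<le>j. of_nat (j choose i) * (-z)^i * 1^(j-i))"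
      unfolding e by (rule binomial_ring)
    also have "\<dots> = (\<Sum>i\<le>j. real (j choose i) * (-z)^i)"
      by (simp only: power_one mult_1_right)
    finally have bj: "(1 - z)^j = (\<Sum>i\<le>j. real (j choose i) * (-z)^i)" .
    show "T1 lam n j * (1 - z)^j = (\<Sum>i\<le>j. T1 lam n j * real (j choose i) * (-z)^i)"
      unfolding bj sum_distrib_left by (simp only: mult.assoc)
  qed
  also have "\<dots> = (\<Sum>i<n. \<Sum>j\<in>{i..<n}. T1 lam n j * real (j choose i) * (-z)^i)"
    by (rule swap_tri)
  also have "\<dots> = (\<Sum>i<n. (-z)^i * (T1 lam n i * (-1)^(n - 1 - i) * ((real n + lam) / (lam + 1 + real i))))"
  proof (rule sum.cong[OF refl])
    fix i assume "i \<in> {..<n}"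
    hence i: "i < n" by simp
    show "(\<Sum>j\<in>{i..<n}. T1 lam n j * real (j choose i) * (-z)^i) =
          (-z)^i * (T1 lam n i * (-1)^(n - 1 - i) * ((real n + lam) / (lam + 1 + real i)))"
      unfolding sum_distrib_right[symmetric] IN[OF lam i] by (rule mult.commute)
  qed
  finally have A: "(\<Sum>j<n. T1 lam n j * (1 - z)^j) = (\<Sum>i<n. (-z)^i * (T1 lam n i * (-1)^(n - 1 - i) * ((real n + lam) / (lam + 1 + real i))))" .
  have B: "(lam + 1) * ((-z)^i * (T1 lam n i * (-1)^(n - 1 - i) * ((real n + lam) / (lam + 1 + real i))))
        = (real n + lam) * (-1)^(n+1) * (T2 lam n i * z^i)" if i: "i < n" for i
  proof -
    have s1: "(-z)^i * (-1::real)^(n - 1 - i) = (-1)^(n+1) * z^i"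
    proof -
      have pm: "(-z)^i = (-1)^i * z^i" by (rule power_minus)
      have "(-z)^i * (-1::real)^(n - 1 - i) = ((-1)^i * (-1)^(n - 1 - i)) * z^i"
        unfolding pm by (simp only: mult_ac)
      also have "(-1::real)^i * (-1)^(n - 1 - i) = (-1)^(i + (n - 1 - i))" by (rule power_add[symmetric])
      also have "i + (n - 1 - i) = n - 1" using i by simp
      also have "(-1::real)^(n - 1) = (-1)^(n+1)"
      proof -
        obtain m where m: "n = Suc m" using n by (cases n) auto
        show ?thesis by (simp add: m)
      qed
      finally show ?thesis .
    qed
    have p: "pochhammer (lam + 1) i * (lam + 1 + real i) = (lam + 1) * pochhammer (lam + 2) i"
    proof -
      have "pochhammer (lam + 1) (Suc i) = (lam + 1 + real i) * pochhammer (lam + 1) i" by (simp add: pochhammer_rec')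
      moreover have "pochhammer (lam + 1) (Suc i) = (lam + 1) * pochhammer (lam + 2) i" by (simp add: pochhammer_rec add.assoc)
      ultimately show ?thesis by (simp add: mult.commute)
    qed
    have nz: "pochhammer (lam + 1) i > 0" "pochhammer (lam + 2) i > 0" "lam + 1 + real i > 0" "lam + 1 > 0"
      using lam by (auto intro!: pochhammer_pos)
    show ?thesis
      unfolding T1_def T2_def
      by (rule B_alg) (use nz p s1 in auto)
  qed
  have "(lam + 1) * (\<Sum>j<n. T1 lam n j * (1 - z)^j) = (\<Sum>i<n. (real n + lam) * (-1)^(n+1) * (T2 lam n i * z^i))"
    unfolding A sum_distrib_left by (rule sum.cong[OF refl]) (rule B, simp)
  thus ?thesis by (simp only: sum_distrib_left)
qed


lemma sumform:
  fixes lam u :: real assumes lam: "lam > 0"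
  shows "(\<Sum>k<Suc n. real k * pcoef lam n k * Beta (lam + real k + 1/2) (1/2) * u ^ k) =
    - (c_const n lam * (real n * (real n + 2 * lam) / (lam + 1)) * (u / 2) * (\<Sum>j<n. T2 lam n j * (u / 2) ^ j))"
proof -
  have "(\<Sum>k<Suc n. real k * pcoef lam n k * Beta (lam + real k + 1/2) (1/2) * u ^ k) =
        (\<Sum>j<n. real (Suc j) * pcoef lam n (Suc j) * Beta (lam + real (Suc j) + 1/2) (1/2) * u ^ Suc j)"
    by (simp only: sum.lessThan_Suc_shift)
  also have "\<dots> = (\<Sum>j<n. - (c_const n lam * (real n * (real n + 2 * lam) / (lam + 1)) * (u / 2) * (T2 lam n j * (u / 2) ^ j)))"
  proof (rule sum.cong[OF refl])
    fix j
    show "real (Suc j) * pcoef lam n (Suc j) * Beta (lam + real (Suc j) + 1/2) (1/2) * u ^ Suc j =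
          - (c_const n lam * (real n * (real n + 2 * lam) / (lam + 1)) * (u / 2) * (T2 lam n j * (u / 2) ^ j))"
      using TL[OF lam, of j n u] by (simp only: minus_equation_iff minus_minus)
  qed
  also have "\<dots> = - (c_const n lam * (real n * (real n + 2 * lam) / (lam + 1)) * (u / 2) * (\<Sum>j<n. T2 lam n j * (u / 2) ^ j))"
    by (simp only: sum_negf sum_distrib_left)
  finally show ?thesis .
qed

lemma gm_form:
  fixes lam :: real assumes lam: "lam > 0"
  shows "gegenbauer n lam = (\<lambda>t. \<Sum>k<Suc n. pcoef lam n k * (1 - t) ^ k)"
proof (rule ext)
  fix t :: real
  have "gegenbauer n lam t = (\<Sum>k=0..n. ((-lam) gchoose k) * (2 - 2*t) ^ k * ((-1) ^ (n - k) * ((2 * (-lam) - 2 * of_nat k) gchoose (n - k))))"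
    unfolding gegenbauer_def by (rule gegen_expand[of "-1" "2 - 2*t" t "-lam" n]) simp_all
  also have "\<dots> = (\<Sum>k<Suc n. pcoef lam n k * (1 - t) ^ k)"
  proof -
    have st: "{0..n} = {..<Suc n}" by auto
    show ?thesis unfolding st
    proof (rule sum.cong[OF refl])
      fix k assume "k \<in> {..<Suc n}"
      hence kn: "k \<le> n" by simp
      have "(2 - 2*t) ^ k = 2 ^ k * (1 - t) ^ k"
        by (simp add: power_mult_distrib[symmetric])
      thus "((-lam) gchoose k) * (2 - 2*t) ^ k * ((-1) ^ (n - k) * ((2 * (-lam) - 2 * of_nat k) gchoose (n - k))) =
            pcoef lam n k * (1 - t) ^ k"
        using coefA[OF lam kn] by (simp add: mult_ac)
    qed
  qed
  finally show "gegenbauer n lam t = (\<Sum>k<Suc n. pcoef lam n k * (1 - t) ^ k)" .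
qed

lemma gp_form:
  fixes lam :: real assumes lam: "lam > 0"
  shows "gegenbauer n lam = (\<lambda>t. \<Sum>k<Suc n. ((-1) ^ n * pcoef lam n k) * (1 + t) ^ k)"
proof (rule ext)
  fix t :: real
  have "gegenbauer n lam t = (\<Sum>k=0..n. ((-lam) gchoose k) * (- 2 * t - 2) ^ k * (1 ^ (n - k) * ((2 * (-lam) - 2 * of_nat k) gchoose (n - k))))"
    unfolding gegenbauer_def by (rule gegen_expand[of 1 "- 2 * t - 2" t "-lam" n]) simp_all
  also have "\<dots> = (\<Sum>k<Suc n. ((-1) ^ n * pcoef lam n k) * (1 + t) ^ k)"
  proof -
    have st: "{0..n} = {..<Suc n}" by auto
    show ?thesis unfolding st
    proof (rule sum.cong[OF refl])
      fix k assume "k \<in> {..<Suc n}"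
      hence kn: "k \<le> n" by simp
      have a: "(- 2 * t - 2) ^ k = (-1) ^ k * 2 ^ k * (1 + t) ^ k"
      proof -
        have "- 2 * t - 2 = (-1) * 2 * (1 + t)" by simp
        thus ?thesis by (simp only: power_mult_distrib)
      qed
      have b: "(-1::real) ^ n * (-1) ^ (n - k) = (-1) ^ k"
      proof -
        have "(-1::real) ^ n = (-1) ^ k * (-1) ^ (n - k)"
          using kn by (simp add: power_add[symmetric])
        hence "(-1::real) ^ n * (-1) ^ (n - k) = (-1) ^ k * ((-1) ^ (n - k) * (-1) ^ (n - k))" by simp
        also have "(-1::real) ^ (n - k) * (-1) ^ (n - k) = 1" by (simp add: power_mult_distrib[symmetric])
        finally show ?thesis by simp
      qed
      have "((-1) ^ n * pcoef lam n k) * (1 + t) ^ k =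
            ((-1) ^ n * (-1) ^ (n - k)) * (((-lam) gchoose k) * 2 ^ k * ((2 * (-lam) - 2 * of_nat k) gchoose (n - k))) * (1 + t) ^ k"
        unfolding coefA[OF lam kn, symmetric] by (simp only: mult_ac)
      also have "\<dots> = ((-lam) gchoose k) * (- 2 * t - 2) ^ k * (1 ^ (n - k) * ((2 * (-lam) - 2 * of_nat k) gchoose (n - k)))"
        unfolding a b by (simp only: power_one mult_1_left mult_ac)
      finally show "((-lam) gchoose k) * (- 2 * t - 2) ^ k * (1 ^ (n - k) * ((2 * (-lam) - 2 * of_nat k) gchoose (n - k))) =
            ((-1) ^ n * pcoef lam n k) * (1 + t) ^ k" by simp
    qed
  qed
  finally show "gegenbauer n lam t = (\<Sum>k<Suc n. ((-1) ^ n * pcoef lam n k) * (1 + t) ^ k)" .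
qed

lemma alg1:
  fixes c N D z H L :: real assumes "L \<noteq> 0"
  shows "c * (N / D) * z * H = c * N * z / (D * L) * (L * H)"
  using assms by (simp add: field_simps)

lemma alg2:
  fixes c N D z L sg S :: real assumes "D \<noteq> 0"
  shows "c * N * z / (D * L) * (D * sg * S) = sg * (c * (N / L) * z * S)"
  using assms by (simp add: field_simps)

theorem proposition3p7:
  fixes lam x :: real and n :: nat
  assumes "lam > 0" and "x \<in> {-1..1}"
  shows "(D_plus lam (gegenbauer n lam) x =
           c_const n lam * (real n * (real n + 2 * lam) / (real n + lam)) * ((1 + x) / 2) *
           hyp2F1 (1 - real n) (real n + 2 * lam + 1) (lam + 1) ((1 - x) / 2)) \<and>
         (D_minus lam (gegenbauer n lam) x =
           c_const n lam * (real n * (real n + 2 * lam) / (lam + 1)) * ((1 - x) / 2) *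
           hyp2F1 (1 - real n) (real n + 2 * lam + 1) (lam + 2) ((1 - x) / 2))"
proof -
  note lam = assms(1) and x = assms(2)
  define C where "C = c_const n lam * (real n * (real n + 2 * lam) / (lam + 1))"
  define S2 where "S2 u = (\<Sum>j<n. T2 lam n j * (u / 2) ^ j)" for u
  have Dm: "D_minus lam (gegenbauer n lam) x = C * ((1 - x) / 2) * S2 (1 - x)"
    unfolding gm_form[OF lam] Dminus_poly[OF lam x] sumform[OF lam] C_def S2_def by simp
  have Dp: "D_plus lam (gegenbauer n lam) x = (-1) ^ (n + 1) * (C * ((1 + x) / 2) * S2 (1 + x))"
  proof -
    have "D_plus lam (gegenbauer n lam) x = (\<Sum>k<Suc n. real k * ((-1) ^ n * pcoef lam n k) * Beta (lam + real k + 1/2) (1/2) * (1 + x) ^ k)"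
      unfolding gp_form[OF lam] by (rule Dplus_poly[OF lam x])
    also have "\<dots> = (-1) ^ n * (\<Sum>k<Suc n. real k * pcoef lam n k * Beta (lam + real k + 1/2) (1/2) * (1 + x) ^ k)"
      unfolding sum_distrib_left by (rule sum.cong[OF refl]) (simp only: mult_ac)
    also have "\<dots> = (-1) ^ (n + 1) * (C * ((1 + x) / 2) * S2 (1 + x))"
      unfolding sumform[OF lam] C_def S2_def by simp
    finally show ?thesis .
  qed
  show ?thesis
  proof (cases "n = 0")
    case True
    have "D_minus lam (gegenbauer n lam) x = 0" unfolding Dm C_def using True by simp
    moreover have "D_plus lam (gegenbauer n lam) x = 0" unfolding Dp C_def using True by simp
    ultimately show ?thesis using True by simp
  next
    case False
    hence n1: "n \<ge> 1" by simp
    have h2: "hyp2F1 (1 - real n) (real n + 2 * lam + 1) (lam + 2) ((1 - x) / 2) = S2 (1 - x)"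
    proof -
      have "hyp2F1 (1 - real n) (real n + 2 * lam + 1) (lam + 2) ((1 - x) / 2) =
        (\<Sum>j<n. pochhammer (1 - real n) j * pochhammer (real n + 2 * lam + 1) j / (pochhammer (lam + 2) j * fact j) * ((1 - x) / 2) ^ j)"
        by (rule hyp_finite[OF n1]) (use lam in simp)
      also have "\<dots> = S2 (1 - x)" unfolding S2_def T2_def ..
      finally show ?thesis .
    qed
    have h1: "hyp2F1 (1 - real n) (real n + 2 * lam + 1) (lam + 1) ((1 - x) / 2) = (\<Sum>j<n. T1 lam n j * (1 - (1 + x) / 2) ^ j)"
    proof -
      have e: "(1 - x) / 2 = 1 - (1 + x) / 2" by (simp add: field_simps)
      have "hyp2F1 (1 - real n) (real n + 2 * lam + 1) (lam + 1) ((1 - x) / 2) =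
        (\<Sum>j<n. pochhammer (1 - real n) j * pochhammer (real n + 2 * lam + 1) j / (pochhammer (lam + 1) j * fact j) * ((1 - x) / 2) ^ j)"
        by (rule hyp_finite[OF n1]) (use lam in simp)
      also have "\<dots> = (\<Sum>j<n. T1 lam n j * (1 - (1 + x) / 2) ^ j)" unfolding T1_def e ..
      finally show ?thesis .
    qed
    have K: "(lam + 1) * (\<Sum>j<n. T1 lam n j * (1 - (1 + x) / 2) ^ j) = (real n + lam) * (-1) ^ (n + 1) * S2 (1 + x)"
      unfolding S2_def by (rule KI[OF lam n1])
    have nl: "real n + lam \<noteq> 0" "lam + 1 \<noteq> 0" using lam by simp_all
    have "c_const n lam * (real n * (real n + 2 * lam) / (real n + lam)) * ((1 + x) / 2) *
           hyp2F1 (1 - real n) (real n + 2 * lam + 1) (lam + 1) ((1 - x) / 2)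
         = c_const n lam * (real n * (real n + 2 * lam)) * ((1 + x) / 2) / ((real n + lam) * (lam + 1)) *
           ((lam + 1) * (\<Sum>j<n. T1 lam n j * (1 - (1 + x) / 2) ^ j))"
      unfolding h1 by (rule alg1) (use nl in simp)
    also have "\<dots> = (-1) ^ (n + 1) * (C * ((1 + x) / 2) * S2 (1 + x))"
      unfolding K C_def by (rule alg2) (use nl in simp)
    finally have "D_plus lam (gegenbauer n lam) x = c_const n lam * (real n * (real n + 2 * lam) / (real n + lam)) * ((1 + x) / 2) *
           hyp2F1 (1 - real n) (real n + 2 * lam + 1) (lam + 1) ((1 - x) / 2)"
      using Dp by simp
    moreover have "D_minus lam (gegenbauer n lam) x = c_const n lam * (real n * (real n + 2 * lam) / (lam + 1)) * ((1 - x) / 2) *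
           hyp2F1 (1 - real n) (real n + 2 * lam + 1) (lam + 2) ((1 - x) / 2)"
      unfolding Dm h2 C_def ..
    ultimately show ?thesis by simp
  qed
qed


end
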